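(* Let $d\ge1$ and let $A$ be the adjacency matrix of a tournament of Type (2) with $n=2d$ vertices whose Seidel matrix has spectrum $\{(-\theta)^d,\theta^d\}$ with $\theta>0$. Then $d$ is even and $I+A-A^T$ is a skew Hadamard matrix.
   Context: A tournament on vertex set $V$ is an orientation of the complete graph on $V$; its adjacency matrix $A$ has $A_{xy}=1$ if $x\to y$ and $0$ otherwise, and its Seidel matrix is $S=\sqrt{-1}(A-A^T)$. Let $\tau_1<\cdots<\tau_s$ be the distinct eigenvalues of $S$ with multiplicities $m_i$, and main angles $\beta_i=\frac1{\sqrt n}\|E_ij\|$, where $E_i$ is the orthogonal projection onto the $\tau_i$-eigenspace and $j$ the all-ones vector. The tournament is of Type (1) if $\beta_1=0$; of Type (2) if $\beta_1\neq0$ and $m_1>1$; of Type (3) if $m_1=1$, $\beta_2=0$ and $c_2<0$, where $c_2=n\beta_1^2/(\tau_1-\tau_2)+\sum_{i=3}^s n\beta_i^2/(\tau_i-\tau_2)$; and of Type (4) otherwise. An $n\times n$ $(\pm1)$-matrix $H$ is skew Hadamard if $H+H^T=2I$ and $HH^T=nI$. *)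

theory Defs
  imports "Jordan_Normal_Form.Schur_Decomposition" "Jordan_Normal_Form.Char_Poly"
begin

definition tournament :: "nat \<Rightarrow> (nat \<Rightarrow> nat \<Rightarrow> bool) \<Rightarrow> bool" where
  "tournament n T \<longleftrightarrow> (\<forall>x<n. \<not> T x x) \<and>
     (\<forall>x<n. \<forall>y<n. x \<noteq> y \<longrightarrow> (T x y \<longleftrightarrow> \<not> T y x))"

definition tour_adj :: "nat \<Rightarrow> (nat \<Rightarrow> nat \<Rightarrow> bool) \<Rightarrow> int mat" where
  "tour_adj n T = mat n n (\<lambda>(x, y). if T x y then 1 else 0)"

definition seidel :: "int mat \<Rightarrow> complex mat" where
  "seidel A = \<i> \<cdot>\<^sub>m map_mat of_int (A - A\<^sup>T)"

definition eigenspace_mat :: "complex mat \<Rightarrow> complex \<Rightarrow> complex vec set" where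
  "eigenspace_mat S \<tau> = {v \<in> carrier_vec (dim_row S). S *\<^sub>v v = \<tau> \<cdot>\<^sub>v v}"

definition eig_proj :: "complex mat \<Rightarrow> complex \<Rightarrow> complex mat" where
  "eig_proj S \<tau> = (THE E. E \<in> carrier_mat (dim_row S) (dim_row S) \<and> E * E = E \<and>
      mat_adjoint E = E \<and> (\<lambda>v. E *\<^sub>v v) ` carrier_vec (dim_row S) = eigenspace_mat S \<tau>)"

definition vnorm :: "complex vec \<Rightarrow> real" where
  "vnorm v = sqrt (\<Sum>i<dim_vec v. (cmod (v $ i))\<^sup>2)"

definition main_angle :: "complex mat \<Rightarrow> complex \<Rightarrow> real" where
  "main_angle S \<tau> = vnorm (eig_proj S \<tau> *\<^sub>v vec (dim_row S) (\<lambda>_. 1)) / sqrt (real (dim_row S))"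

text \<open>Smallest eigenvalue tau_1 (eigenvalues of the Hermitian S are real) and its multiplicity.\<close>
definition least_eig :: "complex mat \<Rightarrow> real" where
  "least_eig S = Min {r :: real. poly (char_poly S) (complex_of_real r) = 0}"

definition least_eig_mult :: "complex mat \<Rightarrow> nat" where
  "least_eig_mult S = order (complex_of_real (least_eig S)) (char_poly S)"

definition type2_tournament :: "nat \<Rightarrow> (nat \<Rightarrow> nat \<Rightarrow> bool) \<Rightarrow> bool" where
  "type2_tournament n T \<longleftrightarrow> tournament n T \<and>
     (let S = seidel (tour_adj n T) in
        main_angle S (complex_of_real (least_eig S)) \<noteq> 0 \<and> least_eig_mult S > 1)"

definition skew_hadamard :: "nat \<Rightarrow> int mat \<Rightarrow> bool" where
  "skew_hadamard n H \<longleftrightarrow> H \<in> carrier_mat n n \<and>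
     (\<forall>i<n. \<forall>j<n. H $$ (i, j) = 1 \<or> H $$ (i, j) = -1) \<and>
     H + H\<^sup>T = 2 \<cdot>\<^sub>m 1\<^sub>m n \<and> H * H\<^sup>T = int n \<cdot>\<^sub>m 1\<^sub>m n"

end

theory Submission
  imports Defs
begin
lemma tr_comm:
  fixes A B :: "'a::comm_ring_1 mat"
  assumes "A \<in> carrier_mat n m" "B \<in> carrier_mat m n"
  shows "(\<Sum>i<n. (A*B)$$(i,i)) = (\<Sum>j<m. (B*A)$$(j,j))"
proof -
  have "(\<Sum>i<n. (A*B)$$(i,i)) = (\<Sum>i<n. \<Sum>k<m. A$$(i,k) * B$$(k,i))"
    using assms by (intro sum.cong refl) (auto simp: scalar_prod_def atLeast0LessThan)
  also have "\<dots> = (\<Sum>k<m. \<Sum>i<n. B$$(k,i) * A$$(i,k))"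
    by (subst sum.swap) (simp add: mult.commute)
  also have "\<dots> = (\<Sum>j<m. (B*A)$$(j,j))"
    using assms by (intro sum.cong refl) (auto simp: scalar_prod_def atLeast0LessThan)
  finally show ?thesis .
qed

lemma key:
  fixes S :: "complex mat" and c :: complex and r :: "nat \<Rightarrow> nat \<Rightarrow> real"
  assumes S: "S \<in> carrier_mat n n"
    and cp: "char_poly S = (\<Prod>e \<leftarrow> es. [:- e, 1:])"
    and es: "\<And>e. e \<in> set es \<Longrightarrow> e * e = c"
    and rr: "\<And>i j. i < n \<Longrightarrow> j < n \<Longrightarrow> (S * S - c \<cdot>\<^sub>m 1\<^sub>m n) $$ (i,j) = of_real (r i j)"
    and sym: "\<And>i j. r i j = r j i"
  shows "\<And>i j. i < n \<Longrightarrow> j < n \<Longrightarrow> r i j = 0"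
proof -
  obtain B P Q where sch: "schur_decomposition S es = (B,P,Q)" by (cases "schur_decomposition S es") auto
  from schur_decomposition[OF S cp sch] have wit: "similar_mat_wit S B P Q"
    and ut: "upper_triangular B" and dg: "diag_mat B = es" by auto
  from similar_mat_witD2[OF S wit] have B: "B \<in> carrier_mat n n" and P: "P \<in> carrier_mat n n"
    and Q: "Q \<in> carrier_mat n n" and PQ: "P * Q = 1\<^sub>m n" and QP: "Q * P = 1\<^sub>m n"
    and SB: "S = P * B * Q" by auto
  have Bii: "B $$ (i,i) * B $$ (i,i) = c" if "i < n" for i
  proof -
    have "B $$ (i,i) \<in> set (diag_mat B)" using that B by (auto simp: diag_mat_def)
    thus ?thesis using es dg by auto
  qed
  have Blow: "B $$ (i,j) = 0" if "j < i" "i < n" for i j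
    using ut that B by auto
  define N where "N = B * B - c \<cdot>\<^sub>m 1\<^sub>m n"
  have N: "N \<in> carrier_mat n n" unfolding N_def using B by auto
  have Nlow: "N $$ (i,j) = 0" if "j \<le> i" "i < n" for i j
  proof (cases "j = i")
    case True
    have "(B*B) $$ (i,i) = (\<Sum>k<n. B$$(i,k) * B$$(k,i))"
      using B that by (auto simp: scalar_prod_def atLeast0LessThan)
    also have "\<dots> = (\<Sum>k\<in>{i}. B$$(i,k) * B$$(k,i))"
      using that by (intro sum.mono_neutral_right) (auto, metis Blow linorder_neqE_nat mult_not_zero)
    finally show ?thesis unfolding N_def using B that True Bii by auto
  next
    case False
    have "(B*B) $$ (i,j) = (\<Sum>k<n. B$$(i,k) * B$$(k,j))"
      using B that by (auto simp: scalar_prod_def atLeast0LessThan)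
    also have "\<dots> = 0"
      using that False by (intro sum.neutral) (auto, metis Blow not_le le_less_trans less_le_trans nat_neq_iff)
    finally show ?thesis unfolding N_def using B that False by auto
  qed
  have NN: "(N*N) $$ (i,i) = 0" if "i < n" for i
  proof -
    have "(N*N) $$ (i,i) = (\<Sum>k<n. N$$(i,k) * N$$(k,i))"
      using N that by (auto simp: scalar_prod_def atLeast0LessThan)
    also have "\<dots> = 0"
      using that by (intro sum.neutral) (auto, metis Nlow not_le less_imp_le less_le_trans)
    finally show ?thesis .
  qed
  have e: "Q * (P * X) = X" if "X \<in> carrier_mat n m" for X m
    using that P Q QP by (metis assoc_mult_mat left_mult_one_mat)
  define M where "M = S * S - c \<cdot>\<^sub>m 1\<^sub>m n"
  have M: "M \<in> carrier_mat n n" unfolding M_def using S by auto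
  have MN: "M = P * N * Q"
  proof -
    have "S * S = P * (B * B) * Q"
      unfolding SB using B P Q QP
      by (simp add: assoc_mult_mat[of _ n n _ n _ n] e[of "B*Q" n])
    moreover have "c \<cdot>\<^sub>m 1\<^sub>m n = P * (c \<cdot>\<^sub>m 1\<^sub>m n) * Q"
    proof -
      have "P * (c \<cdot>\<^sub>m 1\<^sub>m n) = c \<cdot>\<^sub>m P" by (subst mult_smult_distrib[OF P one_carrier_mat]) (use P in simp)
      then show ?thesis by (simp add: mult_smult_assoc_mat[OF P Q] PQ)
    qed
    moreover have "P * N * Q = P * (B*B) * Q - P * (c \<cdot>\<^sub>m 1\<^sub>m n) * Q"
      unfolding N_def using B P Q
      by (simp add: mult_minus_distrib_mat[of P n n "B*B" n] minus_mult_distrib_mat[of _ n n _ Q n])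
    ultimately show ?thesis unfolding M_def by simp
  qed
  have MM: "M * M = P * (N * N * Q)"
    unfolding MN using N P Q QP by (simp add: assoc_mult_mat[of _ n n _ n _ n] e[of "N*Q" n])
  have "(\<Sum>i<n. (M*M)$$(i,i)) = (\<Sum>i<n. (N * N * Q * P)$$(i,i))"
    unfolding MM by (rule tr_comm[of _ n n]) (use N P Q in auto)
  also have "\<dots> = (\<Sum>i<n. (N * N)$$(i,i))"
    using N P Q QP by (simp add: assoc_mult_mat[of _ n n _ n _ n])
  also have "\<dots> = 0" using NN by simp
  finally have tr0: "(\<Sum>i<n. (M*M)$$(i,i)) = 0" .
  have "(\<Sum>i<n. (M*M)$$(i,i)) = (\<Sum>i<n. \<Sum>k<n. M$$(i,k) * M$$(k,i))"
    using M by (intro sum.cong refl) (auto simp: scalar_prod_def atLeast0LessThan)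
  also have "\<dots> = of_real (\<Sum>i<n. \<Sum>k<n. (r i k)^2)"
    using rr sym by (simp add: M_def power2_eq_square)
  finally have "complex_of_real (\<Sum>i<n. \<Sum>k<n. (r i k)^2) = 0" using tr0 by metis
  hence "(\<Sum>i<n. \<Sum>k<n. (r i k)^2) = 0" by (simp only: of_real_eq_0_iff)
  hence "\<forall>i\<in>{..<n}. (\<Sum>k<n. (r i k)^2) = 0"
    by (subst (asm) sum_nonneg_eq_0_iff) (auto intro: sum_nonneg)
  hence "\<forall>i\<in>{..<n}. \<forall>k\<in>{..<n}. (r i k)^2 = 0"
    by (auto simp: sum_nonneg_eq_0_iff)
  thus "\<And>i j. i < n \<Longrightarrow> j < n \<Longrightarrow> r i j = 0" by auto
qed

theorem lemma4p4:
  fixes d :: nat and T :: "nat \<Rightarrow> nat \<Rightarrow> bool" and \<theta> :: real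
  assumes "d \<ge> 1"
    and "type2_tournament (2 * d) T"
    and "\<theta> > 0"
    and "char_poly (seidel (tour_adj (2 * d) T)) =
           [:complex_of_real \<theta>, 1:] ^ d * [:- complex_of_real \<theta>, 1:] ^ d"
  shows "even d \<and>
    skew_hadamard (2 * d) (1\<^sub>m (2 * d) + tour_adj (2 * d) T - (tour_adj (2 * d) T)\<^sup>T)"
proof -
  define n where "n = 2 * d"
  define A where "A = tour_adj n T"
  define Bz where "Bz = A - A\<^sup>T"
  define S where "S = seidel A"
  have tour: "tournament n T" using assms(2) unfolding type2_tournament_def n_def by blast
  have A: "A \<in> carrier_mat n n" unfolding A_def tour_adj_def by simp
  have Aij: "A $$ (i,j) = (if T i j then 1 else 0)" if "i < n" "j < n" for i j
    unfolding A_def tour_adj_def using that by simp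
  have Bz: "Bz \<in> carrier_mat n n" unfolding Bz_def using A by (intro minus_carrier_mat, simp)
  have Bzij: "Bz $$ (i,j) = A $$ (i,j) - A $$ (j,i)" if "i < n" "j < n" for i j
    unfolding Bz_def using that A by simp
  have Bskew: "Bz $$ (j,i) = - Bz $$ (i,j)" if "i < n" "j < n" for i j
    using that by (simp add: Bzij)
  have Bdiag: "Bz $$ (i,i) = 0" if "i < n" for i
    using that by (simp add: Bzij)
  have Bpm: "Bz $$ (i,j) = 1 \<or> Bz $$ (i,j) = -1" if "i < n" "j < n" "i \<noteq> j" for i j
  proof -
    have "T i j \<longleftrightarrow> \<not> T j i" using tour that unfolding tournament_def by blast
    thus ?thesis using that by (cases "T i j") (simp_all add: Bzij Aij)
  qed
  have S: "S \<in> carrier_mat n n" unfolding S_def seidel_def Bz_def[symmetric] by (rule smult_carrier_mat, simp add: Bz)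
  have Sij: "S $$ (i,j) = \<i> * of_int (Bz $$ (i,j))" if "i < n" "j < n" for i j
    unfolding S_def seidel_def Bz_def[symmetric] using that Bz by simp
  define es where "es = replicate d (- complex_of_real \<theta>) @ replicate d (complex_of_real \<theta>)"
  define c where "c = complex_of_real (\<theta>^2)"
  have cp: "char_poly S = (\<Prod>e \<leftarrow> es. [:- e, 1:])"
  proof -
    have "(\<Prod>e \<leftarrow> es. [:- e, 1:]) = [:complex_of_real \<theta>, 1:] ^ d * [:- complex_of_real \<theta>, 1:] ^ d"
      unfolding es_def by (simp add: prod_list_replicate)
    then show ?thesis using assms(4) unfolding S_def A_def n_def by simp
  qed
  have esc: "e * e = c" if "e \<in> set es" for e
    using that unfolding es_def c_def by (auto simp: power2_eq_square)
  define r where "r i j = real_of_int (\<Sum>k<n. Bz $$ (i,k) * Bz $$ (j,k)) - (if i = j then \<theta>^2 else 0)" for i j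
  have rsym: "r i j = r j i" for i j unfolding r_def by (simp add: mult.commute)
  have rr: "(S * S - c \<cdot>\<^sub>m 1\<^sub>m n) $$ (i,j) = of_real (r i j)" if "i < n" "j < n" for i j
  proof -
    have "(S * S) $$ (i,j) = (\<Sum>k<n. S $$ (i,k) * S $$ (k,j))"
      using S that by (auto simp: scalar_prod_def atLeast0LessThan)
    also have "\<dots> = (\<Sum>k<n. of_int (Bz $$ (i,k) * Bz $$ (j,k)))"
      using that by (intro sum.cong refl) (auto simp: Sij Bskew[of j], simp add: algebra_simps)
    finally show ?thesis using S that unfolding r_def c_def by simp
  qed
  have r0: "r i j = 0" if "i < n" "j < n" for i j
    by (rule key[OF S cp esc rr rsym that])
  define G where "G i j = (\<Sum>k<n. Bz $$ (i,k) * Bz $$ (j,k))" for i j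
  have Gii: "G i i = int n - 1" if "i < n" for i
  proof -
    have "G i i = (\<Sum>k<n. 1 - (if k = i then 1 else 0))"
      unfolding G_def using that Bpm Bdiag by (intro sum.cong refl) (auto, metis mult_1 mult_minus1 minus_minus)
    also have "\<dots> = int n - 1" using that by (simp add: sum_subtractf)
    finally show ?thesis .
  qed
  have Gij: "G i j = 0" if "i < n" "j < n" "i \<noteq> j" for i j
    using r0[OF that(1,2)] that(3) unfolding r_def G_def[symmetric] by simp
  define h where "h i k = (if i = k then 1 else 0) + Bz $$ (i,k)" for i k
  have hh: "(\<Sum>k<n. h i k * h j k) = (if i = j then int n else 0)" if "i < n" "j < n" for i j
  proof -
    have "(\<Sum>k<n. h i k * h j k) = (\<Sum>k<n. Bz $$ (i,k) * Bz $$ (j,k) + (if k = i then Bz $$ (j,k) else 0)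
        + (if k = j then Bz $$ (i,k) else 0) + (if k = i then (if i = j then 1 else 0) else 0))"
      unfolding h_def by (intro sum.cong refl) (auto simp: algebra_simps)
    also have "\<dots> = G i j + Bz $$ (j,i) + Bz $$ (i,j) + (if i = j then 1 else 0)"
      using that unfolding G_def by (simp add: sum.distrib)
    also have "\<dots> = (if i = j then int n else 0)"
      using that Gii Gij Bskew[OF that] by auto
    finally show ?thesis .
  qed
  have hpm: "h i j = 1 \<or> h i j = -1" if "i < n" "j < n" for i j
    using that Bpm Bdiag unfolding h_def by (cases "i = j") auto
  define Hm where "Hm = 1\<^sub>m n + A - A\<^sup>T"
  have Hm: "Hm \<in> carrier_mat n n" unfolding Hm_def using A by (intro minus_carrier_mat, simp)
  have Hmij: "Hm $$ (i,j) = h i j" if "i < n" "j < n" for i j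
    unfolding Hm_def h_def using that A by (simp add: Bzij)
  have sh: "skew_hadamard n Hm"
    unfolding skew_hadamard_def
  proof (intro conjI allI impI)
    show "Hm \<in> carrier_mat n n" by (rule Hm)
    show "Hm $$ (i, j) = 1 \<or> Hm $$ (i, j) = - 1" if "i < n" "j < n" for i j
      using hpm[OF that] Hmij[OF that] by simp
    show "Hm + Hm\<^sup>T = 2 \<cdot>\<^sub>m 1\<^sub>m n"
    proof (rule eq_matI)
      fix i j assume ij: "i < dim_row (2 \<cdot>\<^sub>m 1\<^sub>m n :: int mat)" "j < dim_col (2 \<cdot>\<^sub>m 1\<^sub>m n :: int mat)"
      hence ij: "i < n" "j < n" by auto
      show "(Hm + Hm\<^sup>T) $$ (i, j) = (2 \<cdot>\<^sub>m 1\<^sub>m n) $$ (i, j)"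
        using Hm ij Bskew[OF ij] Bdiag by (auto simp: Hmij h_def)
    qed (use Hm in auto)
    show "Hm * Hm\<^sup>T = int n \<cdot>\<^sub>m 1\<^sub>m n"
    proof (rule eq_matI)
      fix i j assume ij: "i < dim_row (int n \<cdot>\<^sub>m 1\<^sub>m n)" "j < dim_col (int n \<cdot>\<^sub>m 1\<^sub>m n)"
      hence ij: "i < n" "j < n" by auto
      have "(Hm * Hm\<^sup>T) $$ (i,j) = (\<Sum>k<n. h i k * h j k)"
        using Hm ij by (auto simp: scalar_prod_def atLeast0LessThan Hmij intro!: sum.cong)
      then show "(Hm * Hm\<^sup>T) $$ (i,j) = (int n \<cdot>\<^sub>m 1\<^sub>m n) $$ (i,j)"
        using hh[OF ij] ij by simp
    qed (use Hm in auto)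
  qed
  have d2: "d \<ge> 2"
  proof -
    let ?p = "char_poly S"
    let ?t = "complex_of_real \<theta>"
    have cpS: "?p = [:?t,1:]^d * [:- ?t,1:]^d" using assms(4) unfolding S_def A_def n_def .
    have e1: "?t + complex_of_real x = 0 \<longleftrightarrow> x = - \<theta>" for x
      by (metis add.inverse_inverse add_eq_0_iff of_real_add of_real_eq_0_iff)
    have e2: "- ?t + complex_of_real x = 0 \<longleftrightarrow> x = \<theta>" for x
      by (metis add.commute diff_add_cancel add_eq_0_iff2 minus_diff_eq neg_equal_iff_equal of_real_diff of_real_eq_0_iff right_minus_eq)
    have roots: "{x::real. poly ?p (of_real x) = 0} = {-\<theta>, \<theta>}"
      using assms(1) by (auto simp: cpS e1 e2)
    have le: "least_eig S = -\<theta>" unfolding least_eig_def roots using assms(3) by simp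
    have nz: "?p \<noteq> 0" unfolding cpS by simp
    have o1: "order (complex_of_real (-\<theta>)) ([:?t,1:]^d) = d"
      using order_power_n_n[of "complex_of_real (-\<theta>)" d] by simp
    have o2: "order (complex_of_real (-\<theta>)) ([:-?t,1:]^d) = 0"
    proof (rule order_0I)
      have "- ?t - ?t \<noteq> 0" using assms(3) by simp
      thus "poly ([:-?t,1:]^d) (complex_of_real (-\<theta>)) \<noteq> 0" by simp
    qed
    have "least_eig_mult S = d"
      unfolding least_eig_mult_def le using order_mult[OF nz[unfolded cpS]] o1 o2 cpS by simp
    moreover have "least_eig_mult S > 1"
      using assms(2) unfolding type2_tournament_def Let_def S_def A_def n_def by blast
    ultimately show ?thesis by simp
  qed
  have ev: "even d"
  proof -
    have n3: "0 < n" "1 < n" "2 < n" using d2 unfolding n_def by auto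
    have "(\<Sum>k<n. (h 0 k + h 1 k) * (h 0 k + h 2 k)) =
          (\<Sum>k<n. h 0 k * h 0 k) + (\<Sum>k<n. h 0 k * h 2 k) + (\<Sum>k<n. h 1 k * h 0 k) + (\<Sum>k<n. h 1 k * h 2 k)"
    proof -
      have "(\<Sum>k<n. (h 0 k + h 1 k) * (h 0 k + h 2 k)) = (\<Sum>k<n. h 0 k * h 0 k + h 0 k * h 2 k + h 1 k * h 0 k + h 1 k * h 2 k)"
        by (intro sum.cong refl) (simp add: algebra_simps)
      then show ?thesis by (simp add: sum.distrib)
    qed
    also have "\<dots> = int n" using hh n3 by simp
    finally have e1: "(\<Sum>k<n. (h 0 k + h 1 k) * (h 0 k + h 2 k)) = int n" .
    have "(\<Sum>k<n. (h 0 k + h 1 k) * (h 0 k + h 2 k)) = (\<Sum>k<n. if h 1 k = h 0 k \<and> h 2 k = h 0 k then 4 else 0)"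
    proof (intro sum.cong refl)
      fix k assume "k \<in> {..<n}"
      hence "k < n" by simp
      with hpm[of 0 k] hpm[of 1 k] hpm[of 2 k] n3
      show "(h 0 k + h 1 k) * (h 0 k + h 2 k) = (if h 1 k = h 0 k \<and> h 2 k = h 0 k then 4 else 0)"
        by auto
    qed
    also have "\<dots> = (\<Sum>k\<in>{k\<in>{..<n}. h 1 k = h 0 k \<and> h 2 k = h 0 k}. 4)"
      by (simp only: sum.inter_filter[OF finite_lessThan])
    also have "\<dots> = 4 * int (card {k\<in>{..<n}. h 1 k = h 0 k \<and> h 2 k = h 0 k})" by simp
    finally have "int n = 4 * int (card {k\<in>{..<n}. h 1 k = h 0 k \<and> h 2 k = h 0 k})" using e1 by simp
    hence "n = 4 * card {k\<in>{..<n}. h 1 k = h 0 k \<and> h 2 k = h 0 k}" by linarith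
    thus "even d" unfolding n_def by presburger
  qed
  show ?thesis using ev sh unfolding n_def Hm_def A_def by simp
qed
end
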